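(* Let $(\Sigma_+,\Sigma_-,N_1,N_2,N_3)$ be a solution of the Wainwright–Hsu system satisfying the constraint, and define for $i=1,2,3$ $$a_i(\tau)=\exp\Big(-\int_0^\tau(3\Sigma_i(s)+1)\,ds\Big),$$ where $\Sigma_1=-\frac23\Sigma_+$, $\Sigma_2=\frac13\Sigma_++\frac1{\sqrt3}\Sigma_-$, $\Sigma_3=\frac13\Sigma_+-\frac1{\sqrt3}\Sigma_-$. (a) If $N_1=0$, $N_2,N_3>0$ and $N_2=N_3$, $\Sigma_-=0$ never hold simultaneously, then $a_i(\tau)\to0$ as $\tau\to\infty$ for $i=1,2,3$. (b) If $N_1<0$ and $N_2,N_3>0$, then $a_2(\tau)\to0$ and $a_3(\tau)\to0$ as $\tau\to\infty$, and $a_1$ is bounded on $[0,\infty)$; in particular all three $a_i$ are bounded as $\tau\to\infty$.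
   Context: Wainwright–Hsu system: for functions $N_1,N_2,N_3,\Sigma_+,\Sigma_-$ of $\tau\in\mathbb{R}$ (prime denotes $d/d\tau$), $N_1'=(q-4\Sigma_+)N_1$, $N_2'=(q+2\Sigma_++2\sqrt3\Sigma_-)N_2$, $N_3'=(q+2\Sigma_+-2\sqrt3\Sigma_-)N_3$, $\Sigma_+'=-(2-q)\Sigma_+-3S_+$, $\Sigma_-'=-(2-q)\Sigma_--3S_-$, where $q=2(\Sigma_+^2+\Sigma_-^2)$, $S_+=\frac12[(N_2-N_3)^2-N_1(2N_1-N_2-N_3)]$, $S_-=\frac{\sqrt3}{2}(N_3-N_2)(N_1-N_2-N_3)$, together with the constraint $\Sigma_+^2+\Sigma_-^2+\frac34[N_1^2+N_2^2+N_3^2-2(N_1N_2+N_2N_3+N_1N_3)]=1$. Solutions with these sign conditions exist for all $\tau\in\mathbb{R}$. (Geometrically, the spacetime metric is $-dt^2+\sum_i a_i^{-2}\xi^i\otimes\xi^i$ with $\xi^i$ a left-invariant coframe and $dt/d\tau=3/\theta$.) *)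

theory Defs
  imports "HOL-Analysis.Analysis"
begin

definition WH_q :: "real \<Rightarrow> real \<Rightarrow> real" where
  "WH_q Sp Sm = 2 * (Sp^2 + Sm^2)"

definition WH_Splus :: "real \<Rightarrow> real \<Rightarrow> real \<Rightarrow> real" where
  "WH_Splus n1 n2 n3 = (1/2) * ((n2 - n3)^2 - n1 * (2*n1 - n2 - n3))"

definition WH_Sminus :: "real \<Rightarrow> real \<Rightarrow> real \<Rightarrow> real" where
  "WH_Sminus n1 n2 n3 = (sqrt 3 / 2) * (n3 - n2) * (n1 - n2 - n3)"

definition WH_solution ::
  "(real \<Rightarrow> real) \<Rightarrow> (real \<Rightarrow> real) \<Rightarrow> (real \<Rightarrow> real) \<Rightarrow> (real \<Rightarrow> real) \<Rightarrow> (real \<Rightarrow> real) \<Rightarrow> bool" where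
  "WH_solution N1 N2 N3 Sp Sm \<longleftrightarrow>
    (\<forall>t. (N1 has_real_derivative ((WH_q (Sp t) (Sm t) - 4 * Sp t) * N1 t)) (at t)
       \<and> (N2 has_real_derivative ((WH_q (Sp t) (Sm t) + 2 * Sp t + 2 * sqrt 3 * Sm t) * N2 t)) (at t)
       \<and> (N3 has_real_derivative ((WH_q (Sp t) (Sm t) + 2 * Sp t - 2 * sqrt 3 * Sm t) * N3 t)) (at t)
       \<and> (Sp has_real_derivative (- (2 - WH_q (Sp t) (Sm t)) * Sp t - 3 * WH_Splus (N1 t) (N2 t) (N3 t))) (at t)
       \<and> (Sm has_real_derivative (- (2 - WH_q (Sp t) (Sm t)) * Sm t - 3 * WH_Sminus (N1 t) (N2 t) (N3 t))) (at t)
       \<and> (Sp t)^2 + (Sm t)^2 + (3/4) * ((N1 t)^2 + (N2 t)^2 + (N3 t)^2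
            - 2 * (N1 t * N2 t + N2 t * N3 t + N1 t * N3 t)) = 1)"

definition Sigma1 :: "(real \<Rightarrow> real) \<Rightarrow> (real \<Rightarrow> real) \<Rightarrow> real \<Rightarrow> real" where
  "Sigma1 Sp Sm s = - (2/3) * Sp s"
definition Sigma2 :: "(real \<Rightarrow> real) \<Rightarrow> (real \<Rightarrow> real) \<Rightarrow> real \<Rightarrow> real" where
  "Sigma2 Sp Sm s = (1/3) * Sp s + (1 / sqrt 3) * Sm s"
definition Sigma3 :: "(real \<Rightarrow> real) \<Rightarrow> (real \<Rightarrow> real) \<Rightarrow> real \<Rightarrow> real" where
  "Sigma3 Sp Sm s = (1/3) * Sp s - (1 / sqrt 3) * Sm s"

text \<open>a_i(tau) = exp(- integral_0^tau (3 Sigma_i(s) + 1) ds); only tau >= 0 is relevant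
  (integral over {0..tau}).\<close>
definition scale_factor :: "(real \<Rightarrow> real) \<Rightarrow> real \<Rightarrow> real" where
  "scale_factor Sig tau = exp (- integral {0..tau} (\<lambda>s. 3 * Sig s + 1))"

end

theory Submission
  imports Defs
begin

lemma integral_deriv_pos:
  fixes g :: "real \<Rightarrow> real"
  assumes g: "continuous_on UNIV g" and x: "0 < x"
  shows "((\<lambda>t. integral {0..t} g) has_real_derivative g x) (at x)"
proof -
  have "((\<lambda>t. integral {0..t} g) has_real_derivative g x) (at x within {0..x+1})"
    by (rule integral_has_real_derivative) (use g x in \<open>auto intro: continuous_on_subset\<close>)
  then have "((\<lambda>t. integral {0..t} g) has_real_derivative g x) (at x within {0<..<x+1})"
    by (rule DERIV_subset) (auto simp: subset_iff)
  moreover have "at x within {0<..<x+1} = at x" by (rule at_within_open) (use x in auto)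
  ultimately show ?thesis by (simp only:)
qed

lemma mono_lemma:
  fixes \<Phi> \<phi> g :: "real \<Rightarrow> real" and c a T :: real
  assumes g: "continuous_on UNIV g" and a: "0 \<le> a" "a \<le> T"
    and d: "\<And>t. a \<le> t \<Longrightarrow> (\<Phi> has_real_derivative \<phi> t) (at t)"
    and pos: "\<And>t. a < t \<Longrightarrow> t < T \<Longrightarrow> \<phi> t + c * g t \<ge> 0"
  shows "\<Phi> a + c * integral {0..a} g \<le> \<Phi> T + c * integral {0..T} g"
proof (rule DERIV_nonneg_imp_increasing_open[OF a(2)])
  fix x assume x: "a < x" "x < T"
  have "((\<lambda>t. \<Phi> t + c * integral {0..t} g) has_real_derivative \<phi> x + c * g x) (at x)"
    using d[of x] integral_deriv_pos[OF g, of x] x a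
    by (auto intro!: derivative_eq_intros)
  then show "\<exists>y. ((\<lambda>t. \<Phi> t + c * integral {0..t} g) has_real_derivative y) (at x) \<and> 0 \<le> y"
    using pos[OF x] by blast
next
  have c1: "continuous_on {a..T} \<Phi>"
    by (rule continuous_at_imp_continuous_on) (metis DERIV_isCont atLeastAtMost_iff d)
  have "continuous_on {0..T} (\<lambda>t. integral {0..t} g)"
    by (rule indefinite_integral_continuous_1, rule integrable_continuous_interval)
      (use g in \<open>auto intro: continuous_on_subset\<close>)
  then have c2: "continuous_on {a..T} (\<lambda>t. integral {0..t} g)"
    by (rule continuous_on_subset) (use a in auto)
  show "continuous_on {a..T} (\<lambda>t. \<Phi> t + c * integral {0..t} g)"
    using c1 c2 by (intro continuous_intros) auto
qed

lemma tendsto_exp_neg: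
  fixes I :: "real \<Rightarrow> real"
  assumes "\<And>k. eventually (\<lambda>T. k \<le> I T) at_top"
  shows "((\<lambda>T. exp (- I T)) \<longlongrightarrow> 0) at_top"
proof -
  have "filterlim I at_top at_top" using assms by (simp add: filterlim_at_top)
  then have "filterlim (\<lambda>T. - I T) at_bot at_top" by (simp add: filterlim_uminus_at_top)
  then show ?thesis by (rule filterlim_compose[OF exp_at_bot])
qed

lemma DERIV_ln_lin:
  assumes "(f has_real_derivative k * f t) (at t)" "f t > 0"
  shows "((\<lambda>t. ln (f t)) has_real_derivative k) (at t)"
proof -
  have "((\<lambda>t. ln (f t)) has_real_derivative (1 / f t) * (k * f t)) (at t)"
    by (rule DERIV_chain2[OF DERIV_ln_divide[OF assms(2)] assms(1)])
  then show ?thesis using assms(2) by simp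
qed

lemma sqrt3_facts: "sqrt 3 * sqrt 3 = (3::real)" "3 / sqrt 3 = sqrt (3::real)" "sqrt (3::real) > 0"
  by (auto simp: field_simps)

lemma ln3: "a>0 \<Longrightarrow> b>0 \<Longrightarrow> c>0 \<Longrightarrow> ln (a^2*b*c) = 2*ln a + ln b + ln (c::real)"
  by (simp add: ln_mult ln_realpow)

lemma err_bound:
  fixes D Sm S p :: real
  assumes S: "S > 0" and DS: "\<bar>D\<bar> \<le> S" and D2: "\<bar>D\<bar> \<le> 2" and Sm: "\<bar>Sm\<bar> \<le> 1"
    and p: "0 \<le> p" "p \<le> 2"
  shows "\<bar>p*D* Sm/S\<bar> \<le> 4/S" "2* sqrt 3* Sm^2*D^2/S^2 \<le> 7/S"
proof -
  have "\<bar>p*D* Sm\<bar> = p * \<bar>D\<bar> * \<bar>Sm\<bar>" using p by (simp add: abs_mult)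
  also have "\<dots> \<le> 2 * 2 * 1"
    by (intro mult_mono) (use p D2 Sm in auto)
  finally have "\<bar>p*D* Sm\<bar> \<le> 4" by simp
  then show "\<bar>p*D* Sm/S\<bar> \<le> 4/S" using S by (simp add: divide_right_mono)
  have "Sm^2 \<le> 1" using Sm by (simp add: abs_square_le_1)
  have "D^2 = \<bar>D\<bar> * \<bar>D\<bar>" by (simp add: power2_eq_square abs_mult_self_eq)
  also have "\<dots> \<le> 2 * S" by (intro mult_mono) (use D2 DS in auto)
  finally have D2S: "D^2 \<le> 2 * S" .
  have "Sm^2 * D^2 \<le> 1 * (2 * S)" by (intro mult_mono) (use \<open>Sm^2 \<le> 1\<close> D2S in auto)
  then have "2 * sqrt 3*(Sm^2*D^2) \<le> 2 * sqrt 3*(1*(2*S))" by (intro mult_left_mono) auto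
  then have "2* sqrt 3* Sm^2*D^2 \<le> 2* sqrt 3*(2* S)" by (simp add: mult.assoc)
  also have "\<dots> \<le> 7 * S"
  proof -
    have "sqrt 3 \<le> sqrt ((7/4)^2)" by (intro real_sqrt_le_mono) (simp add: power_divide)
    then have "sqrt 3 \<le> 7/4" by simp
    then show ?thesis using S by (simp add: mult_right_mono)
  qed
  finally have "2* sqrt 3* Sm^2*D^2 \<le> 7 * S" .
  then have "2* sqrt 3* Sm^2*D^2/S^2 \<le> 7 * S / S^2" using S by (simp add: divide_right_mono)
  also have "7 * S / S^2 = 7 / S" using S by (simp add: power2_eq_square)
  finally show "2* sqrt 3* Sm^2*D^2/S^2 \<le> 7/S" .
qed

lemma inv_simp: "(w::real) > 0 \<Longrightarrow> - ((-(3/2)*X*w) * inverse (w ^ Suc (Suc 0))) = (3/2)*X/w"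
  by (simp add: field_simps power2_eq_square)

lemma dlnlin: "(c::real) \<ge> 0 \<Longrightarrow> t \<ge> 0 \<Longrightarrow> ((\<lambda>t. ln (1 + c*t)) has_real_derivative c/(1+c*t)) (at t)"
proof -
  assume c: "c \<ge> 0" and t: "t \<ge> 0"
  have p: "1 + c*t > 0" using c t by (simp add: add_pos_nonneg)
  have "((\<lambda>t. 1 + c*t) has_real_derivative c) (at t)"
    using DERIV_add[OF DERIV_const[of 1] DERIV_cmult[OF DERIV_ident, of c]] by simp
  from DERIV_chain2[OF DERIV_ln_divide[OF p] this] show ?thesis by simp
qed

lemma sq_sum_le: "(y::real)^2 \<le> 2 * x^2 + 2 * (y - x)^2"
proof -
  have "0 \<le> (2*x - y)^2" by simp
  then show ?thesis by (simp add: power2_eq_square algebra_simps)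
qed

lemma frac3: "(S::real) \<noteq> 0 \<Longrightarrow> (P*S*S - R*S - U)/(S*S) = P - R/S - U/S^2"
  by (simp add: field_simps power2_eq_square)

lemma Fd_alg:
  fixes a b sm sp s :: real
  assumes S: "a + b > 0"
  shows "((((2*(sp^2+sm^2) + 2 * sp + 2 * s * sm) * a - (2*(sp^2+sm^2) + 2 * sp - 2 * s * sm) * b) * sm
      + (- (2 - 2*(sp^2+sm^2)) * sm - 3 * ((s / 2) * (b - a) * (0 - a - b))) * (a - b)) * (a + b)
      - ((a - b) * sm) * ((2*(sp^2+sm^2) + 2 * sp + 2 * s * sm) * a + (2*(sp^2+sm^2) + 2 * sp - 2 * s * sm) * b))
      / ((a + b) * (a + b))
    = 2 * s * sm^2 - (3 * s/2)*(a - b)^2 - (2 - 2*(sp^2+sm^2)) * (a - b) * sm / (a + b)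
      - 2 * s * sm^2 * (a - b)^2 / (a + b)^2"
proof -
  have S0: "a + b \<noteq> 0" using S by simp
  have num: "((((2*(sp^2+sm^2) + 2 * sp + 2 * s * sm) * a - (2*(sp^2+sm^2) + 2 * sp - 2 * s * sm) * b) * sm
      + (- (2 - 2*(sp^2+sm^2)) * sm - 3 * ((s / 2) * (b - a) * (0 - a - b))) * (a - b)) * (a + b)
      - ((a - b) * sm) * ((2*(sp^2+sm^2) + 2 * sp + 2 * s * sm) * a + (2*(sp^2+sm^2) + 2 * sp - 2 * s * sm) * b))
     = (2 * s * sm^2 - (3 * s/2)*(a - b)^2) * (a+b) * (a+b) - ((2 - 2*(sp^2+sm^2)) * (a - b) * sm) * (a+b)
       - 2 * s * sm^2 * (a - b)^2"
    by (simp add: algebra_simps power2_eq_square) (simp add: field_simps)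
  show ?thesis unfolding num by (rule frac3[OF S0])
qed

locale whs =
  fixes N1 N2 N3 Sp Sm :: "real \<Rightarrow> real"
  assumes sol: "WH_solution N1 N2 N3 Sp Sm"
begin

lemma dN1: "(N1 has_real_derivative (2*(Sp t^2 + Sm t^2) - 4 * Sp t) * N1 t) (at t)"
  using sol unfolding WH_solution_def WH_q_def by blast
lemma dN2: "(N2 has_real_derivative (2*(Sp t^2 + Sm t^2) + 2 * Sp t + 2 * sqrt 3 * Sm t) * N2 t) (at t)"
  using sol unfolding WH_solution_def WH_q_def by blast
lemma dN3: "(N3 has_real_derivative (2*(Sp t^2 + Sm t^2) + 2 * Sp t - 2 * sqrt 3 * Sm t) * N3 t) (at t)"
  using sol unfolding WH_solution_def WH_q_def by blast
lemma dSp: "(Sp has_real_derivative (- (2 - 2*(Sp t^2 + Sm t^2)) * Sp t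
     - 3 * ((1/2) * ((N2 t - N3 t)^2 - N1 t * (2*N1 t - N2 t - N3 t))))) (at t)"
  using sol unfolding WH_solution_def WH_q_def WH_Splus_def by blast
lemma dSm: "(Sm has_real_derivative (- (2 - 2*(Sp t^2 + Sm t^2)) * Sm t
     - 3 * ((sqrt 3 / 2) * (N3 t - N2 t) * (N1 t - N2 t - N3 t)))) (at t)"
  using sol unfolding WH_solution_def WH_q_def WH_Sminus_def by blast
lemma constr: "(Sp t)^2 + (Sm t)^2 + (3/4) * ((N1 t)^2 + (N2 t)^2 + (N3 t)^2
            - 2 * (N1 t * N2 t + N2 t * N3 t + N1 t * N3 t)) = 1"
  using sol unfolding WH_solution_def by blast

lemma contSp: "continuous_on UNIV Sp"
  by (rule continuous_at_imp_continuous_on) (blast intro: DERIV_isCont[OF dSp])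
lemma contSm: "continuous_on UNIV Sm"
  by (rule continuous_at_imp_continuous_on) (blast intro: DERIV_isCont[OF dSm])

definition "g1 s = 1 - 2 * Sp s"
definition "g2 s = 1 + Sp s + sqrt 3 * Sm s"
definition "g3 s = 1 + Sp s - sqrt 3 * Sm s"

lemma cont_g: "continuous_on UNIV g1" "continuous_on UNIV g2" "continuous_on UNIV g3"
  unfolding g1_def[abs_def] g2_def[abs_def] g3_def[abs_def]
  using contSp contSm
  by (intro continuous_on_diff continuous_on_add continuous_on_const continuous_on_mult; simp)+

lemma integrand_eq: "(\<lambda>s. 3 * Sigma1 Sp Sm s + 1) = g1"
    "(\<lambda>s. 3 * Sigma2 Sp Sm s + 1) = g2" "(\<lambda>s. 3 * Sigma3 Sp Sm s + 1) = g3"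
proof -
  have e: "\<And>x::real. x * 3 / sqrt 3 = x * sqrt 3"
    by (metis sqrt3_facts(2) times_divide_eq_right)
  show "(\<lambda>s. 3 * Sigma1 Sp Sm s + 1) = g1"
    "(\<lambda>s. 3 * Sigma2 Sp Sm s + 1) = g2" "(\<lambda>s. 3 * Sigma3 Sp Sm s + 1) = g3"
  using e by (auto simp: fun_eq_iff Sigma1_def Sigma2_def Sigma3_def g1_def g2_def g3_def algebra_simps)
qed

lemma sf_eq: "scale_factor (Sigma1 Sp Sm) = (\<lambda>T. exp (- integral {0..T} g1))"
    "scale_factor (Sigma2 Sp Sm) = (\<lambda>T. exp (- integral {0..T} g2))"
    "scale_factor (Sigma3 Sp Sm) = (\<lambda>T. exp (- integral {0..T} g3))"
  by (auto simp: fun_eq_iff scale_factor_def integrand_eq)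


lemma int0: "integral {0..0} (g::real\<Rightarrow>real) = 0" by (metis integral_singleton atLeastAtMost_singleton)

lemma dN1neg: "((\<lambda>t. - N1 t) has_real_derivative (2*(Sp t^2 + Sm t^2) - 4 * Sp t) * (- N1 t)) (at t)"
  using DERIV_minus[OF dN1[of t]] by simp

context
  assumes n1: "\<And>t. N1 t < 0" and n2: "\<And>t. N2 t > 0" and n3: "\<And>t. N3 t > 0"
begin

lemma dlnm: "((\<lambda>t. ln (- N1 t)) has_real_derivative (2*(Sp t^2+Sm t^2) - 4*Sp t)) (at t)"
  by (rule DERIV_ln_lin[OF dN1neg]) (use n1 in auto)
lemma dln2: "((\<lambda>t. ln (N2 t)) has_real_derivative (2*(Sp t^2 + Sm t^2) + 2 * Sp t + 2 * sqrt 3 * Sm t)) (at t)"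
  by (rule DERIV_ln_lin[OF dN2]) (use n2 in auto)
lemma dln3: "((\<lambda>t. ln (N3 t)) has_real_derivative (2*(Sp t^2 + Sm t^2) + 2 * Sp t - 2 * sqrt 3 * Sm t)) (at t)"
  by (rule DERIV_ln_lin[OF dN3]) (use n3 in auto)

lemma qform: "(- N1 t)^2 + (N2 t - N3 t)^2 + 2 * ((- N1 t) * (N2 t + N3 t))
   = (N1 t)^2 + (N2 t)^2 + (N3 t)^2 - 2 * (N1 t * N2 t + N2 t * N3 t + N1 t * N3 t)"
  by (simp add: algebra_simps power2_eq_square)

lemma b_bounds: "(- N1 t) * (N2 t + N3 t) \<le> 2/3" "(- N1 t)^2 \<le> 4/3" "(N2 t - N3 t)^2 \<le> 4/3"
   "Sp t ^2 + Sm t ^2 \<le> 1"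
proof -
  have c: "(Sp t)^2 + (Sm t)^2 + (3/4) * ((- N1 t)^2 + (N2 t - N3 t)^2 + 2 * ((- N1 t) * (N2 t + N3 t))) = 1"
    using constr[of t] by (simp only: qform)
  have p: "0 \<le> (- N1 t) * (N2 t + N3 t)"
    by (rule mult_nonneg_nonneg) (use n1[of t] n2[of t] n3[of t] in auto)
  have L: "\<And>a b c d e::real. a \<ge> 0 \<Longrightarrow> b\<ge>0 \<Longrightarrow> c \<ge>0 \<Longrightarrow> d\<ge>0 \<Longrightarrow> e \<ge> 0 \<Longrightarrow>
      a + b + 3/4*(c + d + 2*e) = 1 \<Longrightarrow> e \<le> 2/3 \<and> c \<le> 4/3 \<and> d \<le> 4/3 \<and> a + b \<le> 1"
  proof -
    fix a b c d e :: real
    assume h: "a \<ge> 0" "b\<ge>0" "c \<ge>0" "d\<ge>0" "e \<ge> 0" "a + b + 3/4*(c + d + 2*e) = 1"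
    then have "4*a + 4*b + 3*c + 3*d + 6*e = 4" by (simp add: field_simps)
    then show "e \<le> 2/3 \<and> c \<le> 4/3 \<and> d \<le> 4/3 \<and> a + b \<le> 1" using h by linarith
  qed
  have "(Sp t)^2 \<ge> 0" "(Sm t)^2 \<ge> 0" "(- N1 t)^2 \<ge> 0" "(N2 t - N3 t)^2 \<ge> 0" by simp_all
  from L[OF this p c] show "(- N1 t) * (N2 t + N3 t) \<le> 2/3" "(- N1 t)^2 \<le> 4/3" "(N2 t - N3 t)^2 \<le> 4/3"
     "Sp t ^2 + Sm t ^2 \<le> 1" by auto
qed

lemma b_m2N2N3: "(- N1 t)^2 * N2 t * N3 t \<le> 1/9"
proof -
  define m where "m = - N1 t"
  have m: "m > 0" using n1[of t] by (simp add: m_def)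
  have mS: "m * (N2 t + N3 t) \<le> 2/3" using b_bounds(1)[of t] by (simp add: m_def)
  have S0: "m * (N2 t + N3 t) \<ge> 0" using m n2[of t] n3[of t] by simp
  have sq: "(m * (N2 t + N3 t))^2 \<le> (2/3)^2"
    using mS S0 by (intro power_mono) auto
  have "4 * (N2 t * N3 t) \<le> (N2 t + N3 t)^2"
  proof -
    have "(N2 t + N3 t)^2 - 4 * (N2 t * N3 t) = (N2 t - N3 t)^2" by (simp add: power2_eq_square algebra_simps)
    then show ?thesis by (metis diff_ge_0_iff_ge zero_le_power2)
  qed
  then have "m^2 * (4 * (N2 t * N3 t)) \<le> m^2 * (N2 t + N3 t)^2"
    by (intro mult_left_mono) auto
  moreover have "(m * (N2 t + N3 t))^2 = m^2 * (N2 t + N3 t)^2" by (simp add: power_mult_distrib)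
  ultimately have "4 * (m^2 * N2 t * N3 t) \<le> (m * (N2 t + N3 t))^2"
    by (simp add: algebra_simps)
  moreover have "(2/3::real)^2 = 4/9" by (simp add: power_divide)
  ultimately have "m^2 * N2 t * N3 t \<le> 1/9" using sq by linarith
  then show ?thesis by (simp add: m_def)
qed

lemma b_a1_bounded: "\<exists>C. \<forall>t\<ge>0. \<bar>exp (- integral {0..t} g1)\<bar> \<le> C"
proof -
  define \<Phi> where "\<Phi> t = 2 * ln (- N1 t) + ln (N2 t) + ln (N3 t)" for t
  define \<phi> where "\<phi> t = 2 * (2*(Sp t^2 + Sm t^2) - 4 * Sp t)
     + (2*(Sp t^2 + Sm t^2) + 2 * Sp t + 2 * sqrt 3 * Sm t)
     + (2*(Sp t^2 + Sm t^2) + 2 * Sp t - 2 * sqrt 3 * Sm t)" for t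
  have d: "(\<Phi> has_real_derivative \<phi> t) (at t)" for t
    unfolding \<Phi>_def[abs_def] \<phi>_def
    by (intro DERIV_add DERIV_cmult dlnm dln2 dln3)
  have key: "\<Phi> 0 \<le> \<Phi> T + 2 * integral {0..T} g1" if T: "T \<ge> 0" for T
  proof -
    have "\<Phi> 0 + 2 * integral {0..0} g1 \<le> \<Phi> T + 2 * integral {0..T} g1"
    proof (rule mono_lemma[OF cont_g(1) order_refl T d])
      fix t
      have "0 \<le> 2 * (2 * Sp t - 1)^2 + 8 * Sm t ^2" by simp
      then show "0 \<le> \<phi> t + 2 * g1 t" unfolding \<phi>_def g1_def
        by (simp add: power2_eq_square algebra_simps)
    qed
    then show ?thesis by simp
  qed
  have up: "\<Phi> T \<le> ln (1/9)" for T
  proof -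
    have "\<Phi> T = ln ((- N1 T)^2 * N2 T * N3 T)"
      using ln3[of "- N1 T" "N2 T" "N3 T"] n1[of T] n2[of T] n3[of T] unfolding \<Phi>_def by simp
    also have "\<dots> \<le> ln (1/9)"
      using b_m2N2N3[of T] n1[of T] n2[of T] n3[of T] by (subst ln_le_cancel_iff) auto
    finally show ?thesis .
  qed
  show ?thesis
  proof (intro exI allI impI)
    fix T :: real assume T: "T \<ge> 0"
    have "- integral {0..T} g1 \<le> (ln (1/9) - \<Phi> 0) / 2" using key[OF T] up[of T] by simp
    then show "\<bar>exp (- integral {0..T} g1)\<bar> \<le> exp ((ln (1/9) - \<Phi> 0) / 2)" by simp
  qed
qed


lemma b_a2: "((\<lambda>T. exp (- integral {0..T} g2)) \<longlongrightarrow> 0) at_top"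
proof (rule tendsto_exp_neg)
  fix k :: real
  define \<Phi>a where "\<Phi>a t = ln (- N1 t) + 2 * ln (N3 t) - 3 * t" for t
  define \<phi>a where "\<phi>a t = (2*(Sp t^2+Sm t^2) - 4*Sp t)
      + 2 * (2*(Sp t^2 + Sm t^2) + 2 * Sp t - 2 * sqrt 3 * Sm t) - 3 * 1" for t
  have da: "(\<Phi>a has_real_derivative \<phi>a t) (at t)" for t
    unfolding \<Phi>a_def[abs_def] \<phi>a_def
    by (intro DERIV_diff DERIV_add DERIV_cmult dlnm dln3 DERIV_ident)
  have keyA: "\<Phi>a 0 \<le> \<Phi>a T + 4 * integral {0..T} g2" if T: "T \<ge> 0" for T
  proof -
    have "\<Phi>a 0 + 4 * integral {0..0} g2 \<le> \<Phi>a T + 4 * integral {0..T} g2"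
    proof (rule mono_lemma[OF cont_g(2) order_refl T da])
      fix t
      have "0 \<le> 6 * (Sp t + 1/3)^2 + 6 * Sm t ^2 + 1/3" by simp
      then show "0 \<le> \<phi>a t + 4 * g2 t" unfolding \<phi>a_def g2_def
        by (simp add: power2_eq_square algebra_simps)
    qed
    then show ?thesis by (simp add: int0)
  qed
  define \<Phi>b where "\<Phi>b t = - ln (N2 t)" for t
  define \<phi>b where "\<phi>b t = - (2*(Sp t^2 + Sm t^2) + 2 * Sp t + 2 * sqrt 3 * Sm t)" for t
  have db: "(\<Phi>b has_real_derivative \<phi>b t) (at t)" for t
    unfolding \<Phi>b_def[abs_def] \<phi>b_def
    by (intro DERIV_minus dln2)
  have keyB: "\<Phi>b 0 \<le> \<Phi>b T + 2 * integral {0..T} g2" if T: "T \<ge> 0" for T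
  proof -
    have "\<Phi>b 0 + 2 * integral {0..0} g2 \<le> \<Phi>b T + 2 * integral {0..T} g2"
    proof (rule mono_lemma[OF cont_g(2) order_refl T db])
      fix t
      have "Sp t ^2 + Sm t ^2 \<le> 1" by (rule b_bounds(4))
      then show "0 \<le> \<phi>b t + 2 * g2 t" unfolding \<phi>b_def g2_def
        by (simp add: power2_eq_square algebra_simps)
    qed
    then show ?thesis by (simp add: int0)
  qed
  define Bk where "Bk = exp (ln (N2 0) + 2 * k)"
  define T0 where "T0 = (ln 2 + 2 * ln (Bk + 2) + 4 * k - \<Phi>a 0) / 3"
  show "eventually (\<lambda>T. k \<le> integral {0..T} g2) at_top"
    unfolding eventually_at_top_linorder
  proof (intro exI allI impI)
    fix T assume "max 0 T0 \<le> T"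
    then have T: "T \<ge> 0" "T \<ge> T0" by auto
    show "k \<le> integral {0..T} g2"
    proof (rule ccontr)
      assume "\<not> ?thesis"
      then have I: "integral {0..T} g2 < k" by simp
      have "ln (N2 T) \<le> ln (N2 0) + 2 * k" using keyB[OF T(1)] I unfolding \<Phi>b_def by simp
      then have "N2 T \<le> Bk" unfolding Bk_def using n2[of T]
        by (metis exp_le_cancel_iff exp_ln)
      moreover have "\<bar>N3 T - N2 T\<bar> \<le> 2"
      proof -
        have "(N3 T - N2 T)^2 \<le> 2^2" using b_bounds(3)[of T] by (simp add: power2_commute)
        then show ?thesis using abs_le_square_iff[of "N3 T - N2 T" 2] by simp
      qed
      ultimately have "N3 T \<le> Bk + 2" by linarith
      then have l3: "ln (N3 T) \<le> ln (Bk + 2)" using n3[of T] by simp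
      have "- N1 T \<le> 2"
        by (rule power2_le_imp_le) (use b_bounds(2)[of T] in auto)
      then have lm: "ln (- N1 T) \<le> ln 2" using n1[of T] by simp
      have "\<Phi>a 0 \<le> ln (- N1 T) + 2 * ln (N3 T) - 3 * T + 4 * integral {0..T} g2"
        using keyA[OF T(1)] unfolding \<Phi>a_def by simp
      then have "3 * T < ln 2 + 2 * ln (Bk + 2) + 4 * k - \<Phi>a 0" using l3 lm I by linarith
      moreover have "ln 2 + 2 * ln (Bk + 2) + 4 * k - \<Phi>a 0 \<le> 3 * T"
        using T(2) unfolding T0_def by (simp add: field_simps)
      ultimately show False by linarith
    qed
  qed
qed

lemma b_a3: "((\<lambda>T. exp (- integral {0..T} g3)) \<longlongrightarrow> 0) at_top"
proof (rule tendsto_exp_neg)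
  fix k :: real
  define \<Phi>a where "\<Phi>a t = ln (- N1 t) + 2 * ln (N2 t) - 3 * t" for t
  define \<phi>a where "\<phi>a t = (2*(Sp t^2+Sm t^2) - 4*Sp t)
      + 2 * (2*(Sp t^2 + Sm t^2) + 2 * Sp t + 2 * sqrt 3 * Sm t) - 3 * 1" for t
  have da: "(\<Phi>a has_real_derivative \<phi>a t) (at t)" for t
    unfolding \<Phi>a_def[abs_def] \<phi>a_def
    by (intro DERIV_diff DERIV_add DERIV_cmult dlnm dln2 DERIV_ident)
  have keyA: "\<Phi>a 0 \<le> \<Phi>a T + 4 * integral {0..T} g3" if T: "T \<ge> 0" for T
  proof -
    have "\<Phi>a 0 + 4 * integral {0..0} g3 \<le> \<Phi>a T + 4 * integral {0..T} g3"
    proof (rule mono_lemma[OF cont_g(3) order_refl T da])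
      fix t
      have "0 \<le> 6 * (Sp t + 1/3)^2 + 6 * Sm t ^2 + 1/3" by simp
      then show "0 \<le> \<phi>a t + 4 * g3 t" unfolding \<phi>a_def g3_def
        by (simp add: power2_eq_square algebra_simps)
    qed
    then show ?thesis by (simp add: int0)
  qed
  define \<Phi>b where "\<Phi>b t = - ln (N3 t)" for t
  define \<phi>b where "\<phi>b t = - (2*(Sp t^2 + Sm t^2) + 2 * Sp t - 2 * sqrt 3 * Sm t)" for t
  have db: "(\<Phi>b has_real_derivative \<phi>b t) (at t)" for t
    unfolding \<Phi>b_def[abs_def] \<phi>b_def
    by (intro DERIV_minus dln3)
  have keyB: "\<Phi>b 0 \<le> \<Phi>b T + 2 * integral {0..T} g3" if T: "T \<ge> 0" for T
  proof -
    have "\<Phi>b 0 + 2 * integral {0..0} g3 \<le> \<Phi>b T + 2 * integral {0..T} g3"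
    proof (rule mono_lemma[OF cont_g(3) order_refl T db])
      fix t
      have "Sp t ^2 + Sm t ^2 \<le> 1" by (rule b_bounds(4))
      then show "0 \<le> \<phi>b t + 2 * g3 t" unfolding \<phi>b_def g3_def
        by (simp add: power2_eq_square algebra_simps)
    qed
    then show ?thesis by (simp add: int0)
  qed
  define Bk where "Bk = exp (ln (N3 0) + 2 * k)"
  define T0 where "T0 = (ln 2 + 2 * ln (Bk + 2) + 4 * k - \<Phi>a 0) / 3"
  show "eventually (\<lambda>T. k \<le> integral {0..T} g3) at_top"
    unfolding eventually_at_top_linorder
  proof (intro exI allI impI)
    fix T assume "max 0 T0 \<le> T"
    then have T: "T \<ge> 0" "T \<ge> T0" by auto
    show "k \<le> integral {0..T} g3"
    proof (rule ccontr)
      assume "\<not> ?thesis"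
      then have I: "integral {0..T} g3 < k" by simp
      have "ln (N3 T) \<le> ln (N3 0) + 2 * k" using keyB[OF T(1)] I unfolding \<Phi>b_def by simp
      then have "N3 T \<le> Bk" unfolding Bk_def using n3[of T]
        by (metis exp_le_cancel_iff exp_ln)
      moreover have "\<bar>N2 T - N3 T\<bar> \<le> 2"
      proof -
        have "(N2 T - N3 T)^2 \<le> 2^2" using b_bounds(3)[of T] by (simp add: power2_commute)
        then show ?thesis using abs_le_square_iff[of "N2 T - N3 T" 2] by simp
      qed
      ultimately have "N2 T \<le> Bk + 2" by linarith
      then have l3: "ln (N2 T) \<le> ln (Bk + 2)" using n2[of T] by simp
      have "- N1 T \<le> 2"
        by (rule power2_le_imp_le) (use b_bounds(2)[of T] in auto)
      then have lm: "ln (- N1 T) \<le> ln 2" using n1[of T] by simp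
      have "\<Phi>a 0 \<le> ln (- N1 T) + 2 * ln (N2 T) - 3 * T + 4 * integral {0..T} g3"
        using keyA[OF T(1)] unfolding \<Phi>a_def by simp
      then have "3 * T < ln 2 + 2 * ln (Bk + 2) + 4 * k - \<Phi>a 0" using l3 lm I by linarith
      moreover have "ln 2 + 2 * ln (Bk + 2) + 4 * k - \<Phi>a 0 \<le> 3 * T"
        using T(2) unfolding T0_def by (simp add: field_simps)
      ultimately show False by linarith
    qed
  qed
qed
end

context
  assumes z1: "\<And>t. N1 t = 0" and n2: "\<And>t. N2 t > 0" and n3: "\<And>t. N3 t > 0"
    and nd: "\<And>t. \<not> (N2 t = N3 t \<and> Sm t = 0)"
begin

lemma ca: "Sp t^2 + Sm t^2 + 3/4 * (N2 t - N3 t)^2 = 1"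
proof -
  have "(N1 t)^2 + (N2 t)^2 + (N3 t)^2 - 2 * (N1 t * N2 t + N2 t * N3 t + N1 t * N3 t) = (N2 t - N3 t)^2"
    using z1[of t] by (simp add: power2_eq_square algebra_simps)
  then show ?thesis using constr[of t] by simp
qed

lemma ca_q: "2 - 2*(Sp t^2+Sm t^2) = 3/2*(N2 t - N3 t)^2"
  using ca[of t] by (simp add: field_simps)

lemma sp_bounds: "-1 < Sp t" "Sp t < 1"
proof -
  have "Sp t^2 < 1"
  proof (rule ccontr)
    assume "\<not> Sp t^2 < 1"
    then have h: "Sm t^2 + 3/4 * (N2 t - N3 t)^2 \<le> 0" using ca[of t] by linarith
    have "Sm t^2 \<ge> 0" "(N2 t - N3 t)^2 \<ge> 0" by simp_all
    then have "Sm t^2 = 0" "(N2 t - N3 t)^2 = 0" using h by linarith+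
    then show False using nd[of t] by simp
  qed
  then have "\<bar>Sp t\<bar> < 1" by (simp add: abs_square_less_1)
  then show "-1 < Sp t" "Sp t < 1" by auto
qed

lemma wpos: "1 + Sp t > 0" using sp_bounds(1)[of t] by linarith

lemma Dbound: "(N2 t - N3 t)^2 \<le> 4/3" "\<bar>N2 t - N3 t\<bar> \<le> 2" "\<bar>Sm t\<bar> \<le> 1"
proof -
  have h: "Sp t^2 \<ge> 0" "Sm t^2 \<ge> 0" by simp_all
  then show D: "(N2 t - N3 t)^2 \<le> 4/3" using ca[of t] by linarith
  have "(N2 t - N3 t)^2 \<le> 2^2" using D by simp
  then show "\<bar>N2 t - N3 t\<bar> \<le> 2" using abs_le_square_iff[of "N2 t - N3 t" 2] by simp
  have "(N2 t - N3 t)^2 \<ge> 0" by simp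
  then have "Sm t^2 \<le> 1" using ca[of t] h by linarith
  then show "\<bar>Sm t\<bar> \<le> 1" by (simp add: abs_square_le_1)
qed

lemma keyineq: "3/2 * (N2 t - N3 t)^2 \<le> 4 * (1 + Sp t)"
proof -
  have "0 \<le> (Sp t + 1)^2" "Sm t^2 \<ge> 0" by simp_all
  then have "4 - 4 * Sp t^2 \<le> 8 * (1 + Sp t)" by (simp add: power2_eq_square algebra_simps)
  then show ?thesis using ca[of t] \<open>Sm t^2 \<ge> 0\<close> by linarith
qed

lemma dSpa: "(Sp has_real_derivative (-(3/2)*(N2 t - N3 t)^2*(1+Sp t))) (at t)"
proof -
  have e: "- (2 - 2*(Sp t^2 + Sm t^2)) * Sp t
     - 3 * ((1/2) * ((N2 t - N3 t)^2 - N1 t * (2*N1 t - N2 t - N3 t))) = -(3/2)*(N2 t - N3 t)^2*(1+Sp t)"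
    unfolding ca_q z1 by (simp add: algebra_simps)
  show ?thesis by (subst e[symmetric]) (rule dSp)
qed

lemma dw: "((\<lambda>t. 1 + Sp t) has_real_derivative -(3/2)*(N2 t - N3 t)^2 * (1 + Sp t)) (at t)"
    using DERIV_add[OF DERIV_const[of 1] dSpa[of t]] by (simp only: add_0_left)

lemma dlnw: "((\<lambda>t. ln (1 + Sp t)) has_real_derivative -(3/2)*(N2 t - N3 t)^2) (at t)"
proof (rule DERIV_ln_lin)
  show "((\<lambda>t. 1 + Sp t) has_real_derivative -(3/2)*(N2 t - N3 t)^2 * (1 + Sp t)) (at t)"
    using DERIV_add[OF DERIV_const[of 1] dSpa[of t]] by (simp only: add_0_left)
qed (rule wpos)

lemma dln2a: "((\<lambda>t. ln (N2 t)) has_real_derivative (2*(Sp t^2 + Sm t^2) + 2 * Sp t + 2 * sqrt 3 * Sm t)) (at t)"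
  by (rule DERIV_ln_lin[OF dN2]) (use n2 in auto)
lemma dln3a: "((\<lambda>t. ln (N3 t)) has_real_derivative (2*(Sp t^2 + Sm t^2) + 2 * Sp t - 2 * sqrt 3 * Sm t)) (at t)"
  by (rule DERIV_ln_lin[OF dN3]) (use n3 in auto)

lemma spmono: "0 \<le> a \<Longrightarrow> a \<le> T \<Longrightarrow> Sp T \<le> Sp a"
  using mono_lemma[OF cont_g(1), of a T "\<lambda>t. - Sp t" "\<lambda>t. (3/2)*(N2 t - N3 t)^2*(1+Sp t)" 0]
    DERIV_minus[OF dSpa] wpos
  by (simp add: less_imp_le)

lemma wlow: "T \<ge> 0 \<Longrightarrow> 1 / (1 + Sp T) \<le> 1 / (1 + Sp 0) + 4 * T"
proof -
  assume T: "T \<ge> 0"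
  have d: "((\<lambda>t. 4 * t - inverse (1 + Sp t)) has_real_derivative
     4 * 1 - (- ((-(3/2)*(N2 t - N3 t)^2*(1+Sp t)) * inverse ((1 + Sp t) ^ Suc (Suc 0))))) (at t)" for t
    by (intro DERIV_diff DERIV_cmult DERIV_ident DERIV_inverse_fun dw)
       (use wpos[of t] in auto)
  have "(\<lambda>t. 4 * t - inverse (1 + Sp t)) 0 + 0 * integral {0..0} g1
      \<le> (\<lambda>t. 4 * t - inverse (1 + Sp t)) T + 0 * integral {0..T} g1"
  proof (rule mono_lemma[OF cont_g(1) order_refl T d])
    fix t
    have w: "1 + Sp t > 0" by (rule wpos)
    have "(3/2)*(N2 t - N3 t)^2 / (1 + Sp t) \<le> 4"
      using keyineq[of t] w by (simp add: divide_le_eq)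
    moreover have "(- ((-(3/2)*(N2 t - N3 t)^2*(1+Sp t)) * inverse ((1 + Sp t) ^ Suc (Suc 0))))
        = (3/2)*(N2 t - N3 t)^2 / (1 + Sp t)"
      by (rule inv_simp[OF w])
    ultimately show "0 \<le> 4 * 1 - (- ((-(3/2)*(N2 t - N3 t)^2*(1+Sp t)) * inverse ((1 + Sp t) ^ Suc (Suc 0))))
       + 0 * g1 t" by linarith
  qed
  then show ?thesis by (simp add: inverse_eq_divide)
qed


lemma a_a2: "((\<lambda>T. exp (- integral {0..T} g2)) \<longlongrightarrow> 0) at_top"
proof (rule tendsto_exp_neg)
  fix k :: real
  define w0 where "w0 = 1 + Sp 0"
  have w0: "w0 > 0" unfolding w0_def by (rule wpos)
  define \<Phi>a where "\<Phi>a t = 2 * ln (N3 t) - ln (1 + Sp t) - ln (1 + (4*w0)*t)" for t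
  define \<phi>a where "\<phi>a t = 2 * (2*(Sp t^2 + Sm t^2) + 2 * Sp t - 2 * sqrt 3 * Sm t)
      - (-(3/2)*(N2 t - N3 t)^2) - (4*w0)/(1+(4*w0)*t)" for t
  have da: "(\<Phi>a has_real_derivative \<phi>a t) (at t)" if "t \<ge> 0" for t :: real
    unfolding \<Phi>a_def[abs_def] \<phi>a_def
    by (intro DERIV_diff DERIV_cmult dln3a dlnw dlnlin) (use w0 that in auto)
  have keyA: "\<Phi>a 0 \<le> \<Phi>a T + 4 * integral {0..T} g2" if T: "T \<ge> 0" for T
  proof -
    have "\<Phi>a 0 + 4 * integral {0..0} g2 \<le> \<Phi>a T + 4 * integral {0..T} g2"
    proof (rule mono_lemma[OF cont_g(2) order_refl T da])
      fix t :: real assume t: "0 < t"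
      have e: "\<phi>a t + 4 * g2 t = 4*Sp t^2 + 4*Sm t^2 + 8 * Sp t + 4 + 3/2*(N2 t - N3 t)^2
           - (4*w0)/(1+(4*w0)*t)"
        unfolding \<phi>a_def g2_def by (simp add: algebra_simps)
      have c4: "4*Sp t^2 + 4*Sm t^2 = 4 - 3*(N2 t - N3 t)^2" using ca[of t] by (simp add: field_simps)
      have "1/(1 + Sp t) \<le> 1/w0 + 4 * t" using wlow[of t] t unfolding w0_def by simp
      also have "\<dots> = (1 + (4*w0)*t) / w0" using w0 by (simp add: field_simps)
      finally have "1/(1 + Sp t) \<le> (1 + (4*w0)*t) / w0" .
      then have "w0 / (1 + (4*w0)*t) \<le> 1 + Sp t"
        using w0 wpos[of t] t
        by (simp add: divide_simps add_pos_nonneg split: if_splits) (simp add: mult.commute)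
      then have "4 * (w0/(1+(4*w0)*t)) \<le> 4 * (1 + Sp t)" by simp
      moreover have "(4*w0)/(1+(4*w0)*t) = 4 * (w0/(1+(4*w0)*t))" by simp
      ultimately have Cle: "(4*w0)/(1+(4*w0)*t) \<le> 4 * (1 + Sp t)" by (simp only:)
      define C where "C = (4*w0)/(1+(4*w0)*t)"
      have e': "\<phi>a t + 4 * g2 t = 4*Sp t^2 + 4*Sm t^2 + 8 * Sp t + 4 + 3/2*(N2 t - N3 t)^2 - C"
        using e unfolding C_def .
      have Cle': "C \<le> 4 * (1 + Sp t)" using Cle unfolding C_def .
      show "0 \<le> \<phi>a t + 4 * g2 t" unfolding e' using c4 keyineq[of t] Cle' distrib_left[of 4 1 "Sp t"] by linarith
    qed
    then show ?thesis by (simp add: int0)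
  qed
  define \<Phi>b where "\<Phi>b t = - ln (N2 t) + ln (1 + Sp t)" for t
  define \<phi>b where "\<phi>b t = - (2*(Sp t^2 + Sm t^2) + 2 * Sp t + 2 * sqrt 3 * Sm t)
     + (-(3/2)*(N2 t - N3 t)^2)" for t
  have db: "(\<Phi>b has_real_derivative \<phi>b t) (at t)" for t
    unfolding \<Phi>b_def[abs_def] \<phi>b_def
    by (intro DERIV_add DERIV_minus dln2a dlnw)
  have keyB: "\<Phi>b 0 \<le> \<Phi>b T + 2 * integral {0..T} g2" if T: "T \<ge> 0" for T
  proof -
    have "\<Phi>b 0 + 2 * integral {0..0} g2 \<le> \<Phi>b T + 2 * integral {0..T} g2"
    proof (rule mono_lemma[OF cont_g(2) order_refl T db])
      fix t
      have e: "\<phi>b t + 2 * g2 t = 2 - 2*Sp t^2 - 2*Sm t^2 - 3/2*(N2 t - N3 t)^2"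
        unfolding \<phi>b_def g2_def by (simp add: algebra_simps)
      show "0 \<le> \<phi>b t + 2 * g2 t" unfolding e using ca[of t] by linarith
    qed
    then show ?thesis by (simp add: int0)
  qed
  define Ak where "Ak = exp (ln (N2 0) - ln w0 + 2 * k)"
  define Ck where "Ck = 4 * Ak^2 + 16/3"
  have Ak: "Ak > 0" unfolding Ak_def by simp
  have Ck: "Ck > 0" unfolding Ck_def using Ak by (simp add: add_nonneg_pos)
  define R where "R = ln Ck + 4 * k - \<Phi>a 0"
  define T0 where "T0 = exp R / (4 * w0)"
  show "eventually (\<lambda>T. k \<le> integral {0..T} g2) at_top"
    unfolding eventually_at_top_linorder
  proof (intro exI allI impI)
    fix T assume "max 0 T0 \<le> T"
    then have T: "T \<ge> 0" "T \<ge> T0" by auto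
    define w where "w = 1 + Sp T"
    have w: "w > 0" "w \<le> 2" unfolding w_def using wpos[of T] sp_bounds(2)[of T] by auto
    show "k \<le> integral {0..T} g2"
    proof (rule ccontr)
      assume "\<not> ?thesis"
      then have I: "integral {0..T} g2 < k" by simp
      have "ln (N2 T) \<le> ln (N2 0) - ln w0 + ln w + 2 * k"
        using keyB[OF T(1)] I unfolding \<Phi>b_def w0_def w_def by simp
      also have "\<dots> = ln (Ak * w)" unfolding Ak_def using w by (simp add: ln_mult)
      finally have "N2 T \<le> Ak * w" using n2[of T] Ak w by simp
      then have "(N2 T)^2 \<le> (Ak * w)^2" using n2[of T] by (intro power_mono) auto
      also have "\<dots> = Ak^2 * w * w" by (simp add: power2_eq_square)
      also have "\<dots> \<le> Ak^2 * 2 * w" using w Ak by (intro mult_right_mono mult_left_mono) auto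
      finally have z2: "(N2 T)^2 \<le> 2 * Ak^2 * w" by simp
      have D2: "(N3 T - N2 T)^2 \<le> 8/3 * w"
        using keyineq[of T] unfolding w_def by (simp add: power2_commute)
      have "(N3 T)^2 \<le> 2 * (N2 T)^2 + 2 * (N3 T - N2 T)^2" by (rule sq_sum_le)
      also have "\<dots> \<le> Ck * w" unfolding Ck_def using z2 D2 by (simp add: algebra_simps)
      finally have y2: "(N3 T)^2 \<le> Ck * w" .
      have "2 * ln (N3 T) = ln ((N3 T)^2)" using n3[of T] by (simp add: ln_realpow)
      also have "\<dots> \<le> ln (Ck * w)" using y2 n3[of T] Ck w by (subst ln_le_cancel_iff) auto
      also have "\<dots> = ln Ck + ln w" using Ck w by (simp add: ln_mult)
      finally have ly: "2 * ln (N3 T) \<le> ln Ck + ln w" .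
      have "\<Phi>a 0 \<le> 2 * ln (N3 T) - ln w - ln (1 + (4*w0)*T) + 4 * integral {0..T} g2"
        using keyA[OF T(1)] unfolding \<Phi>a_def w_def by simp
      then have "ln (1 + (4*w0)*T) < R" unfolding R_def using ly I by linarith
      then have "1 + (4*w0)*T < exp R"
        using w0 T(1) by (metis add_pos_nonneg exp_less_cancel_iff exp_ln zero_less_one
            mult_nonneg_nonneg less_imp_le mult_pos_pos zero_less_numeral)
      moreover have "exp R \<le> (4*w0) * T"
        using T(2) w0 unfolding T0_def by (simp add: divide_le_eq mult.commute)
      ultimately show False by linarith
    qed
  qed
qed

lemma a_a3: "((\<lambda>T. exp (- integral {0..T} g3)) \<longlongrightarrow> 0) at_top"
proof (rule tendsto_exp_neg)
  fix k :: real
  define w0 where "w0 = 1 + Sp 0"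
  have w0: "w0 > 0" unfolding w0_def by (rule wpos)
  define \<Phi>a where "\<Phi>a t = 2 * ln (N2 t) - ln (1 + Sp t) - ln (1 + (4*w0)*t)" for t
  define \<phi>a where "\<phi>a t = 2 * (2*(Sp t^2 + Sm t^2) + 2 * Sp t + 2 * sqrt 3 * Sm t)
      - (-(3/2)*(N2 t - N3 t)^2) - (4*w0)/(1+(4*w0)*t)" for t
  have da: "(\<Phi>a has_real_derivative \<phi>a t) (at t)" if "t \<ge> 0" for t :: real
    unfolding \<Phi>a_def[abs_def] \<phi>a_def
    by (intro DERIV_diff DERIV_cmult dln2a dlnw dlnlin) (use w0 that in auto)
  have keyA: "\<Phi>a 0 \<le> \<Phi>a T + 4 * integral {0..T} g3" if T: "T \<ge> 0" for T
  proof -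
    have "\<Phi>a 0 + 4 * integral {0..0} g3 \<le> \<Phi>a T + 4 * integral {0..T} g3"
    proof (rule mono_lemma[OF cont_g(3) order_refl T da])
      fix t :: real assume t: "0 < t"
      have e: "\<phi>a t + 4 * g3 t = 4*Sp t^2 + 4*Sm t^2 + 8 * Sp t + 4 + 3/2*(N2 t - N3 t)^2
           - (4*w0)/(1+(4*w0)*t)"
        unfolding \<phi>a_def g3_def by (simp add: algebra_simps)
      have c4: "4*Sp t^2 + 4*Sm t^2 = 4 - 3*(N2 t - N3 t)^2" using ca[of t] by (simp add: field_simps)
      have "1/(1 + Sp t) \<le> 1/w0 + 4 * t" using wlow[of t] t unfolding w0_def by simp
      also have "\<dots> = (1 + (4*w0)*t) / w0" using w0 by (simp add: field_simps)
      finally have "1/(1 + Sp t) \<le> (1 + (4*w0)*t) / w0" .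
      then have "w0 / (1 + (4*w0)*t) \<le> 1 + Sp t"
        using w0 wpos[of t] t
        by (simp add: divide_simps add_pos_nonneg split: if_splits) (simp add: mult.commute)
      then have "4 * (w0/(1+(4*w0)*t)) \<le> 4 * (1 + Sp t)" by simp
      moreover have "(4*w0)/(1+(4*w0)*t) = 4 * (w0/(1+(4*w0)*t))" by simp
      ultimately have Cle: "(4*w0)/(1+(4*w0)*t) \<le> 4 * (1 + Sp t)" by (simp only:)
      define C where "C = (4*w0)/(1+(4*w0)*t)"
      have e': "\<phi>a t + 4 * g3 t = 4*Sp t^2 + 4*Sm t^2 + 8 * Sp t + 4 + 3/2*(N2 t - N3 t)^2 - C"
        using e unfolding C_def .
      have Cle': "C \<le> 4 * (1 + Sp t)" using Cle unfolding C_def .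
      show "0 \<le> \<phi>a t + 4 * g3 t" unfolding e' using c4 keyineq[of t] Cle' distrib_left[of 4 1 "Sp t"] by linarith
    qed
    then show ?thesis by (simp add: int0)
  qed
  define \<Phi>b where "\<Phi>b t = - ln (N3 t) + ln (1 + Sp t)" for t
  define \<phi>b where "\<phi>b t = - (2*(Sp t^2 + Sm t^2) + 2 * Sp t - 2 * sqrt 3 * Sm t)
     + (-(3/2)*(N2 t - N3 t)^2)" for t
  have db: "(\<Phi>b has_real_derivative \<phi>b t) (at t)" for t
    unfolding \<Phi>b_def[abs_def] \<phi>b_def
    by (intro DERIV_add DERIV_minus dln3a dlnw)
  have keyB: "\<Phi>b 0 \<le> \<Phi>b T + 2 * integral {0..T} g3" if T: "T \<ge> 0" for T
  proof -
    have "\<Phi>b 0 + 2 * integral {0..0} g3 \<le> \<Phi>b T + 2 * integral {0..T} g3"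
    proof (rule mono_lemma[OF cont_g(3) order_refl T db])
      fix t
      have e: "\<phi>b t + 2 * g3 t = 2 - 2*Sp t^2 - 2*Sm t^2 - 3/2*(N2 t - N3 t)^2"
        unfolding \<phi>b_def g3_def by (simp add: algebra_simps)
      show "0 \<le> \<phi>b t + 2 * g3 t" unfolding e using ca[of t] by linarith
    qed
    then show ?thesis by (simp add: int0)
  qed
  define Ak where "Ak = exp (ln (N3 0) - ln w0 + 2 * k)"
  define Ck where "Ck = 4 * Ak^2 + 16/3"
  have Ak: "Ak > 0" unfolding Ak_def by simp
  have Ck: "Ck > 0" unfolding Ck_def using Ak by (simp add: add_nonneg_pos)
  define R where "R = ln Ck + 4 * k - \<Phi>a 0"
  define T0 where "T0 = exp R / (4 * w0)"
  show "eventually (\<lambda>T. k \<le> integral {0..T} g3) at_top"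
    unfolding eventually_at_top_linorder
  proof (intro exI allI impI)
    fix T assume "max 0 T0 \<le> T"
    then have T: "T \<ge> 0" "T \<ge> T0" by auto
    define w where "w = 1 + Sp T"
    have w: "w > 0" "w \<le> 2" unfolding w_def using wpos[of T] sp_bounds(2)[of T] by auto
    show "k \<le> integral {0..T} g3"
    proof (rule ccontr)
      assume "\<not> ?thesis"
      then have I: "integral {0..T} g3 < k" by simp
      have "ln (N3 T) \<le> ln (N3 0) - ln w0 + ln w + 2 * k"
        using keyB[OF T(1)] I unfolding \<Phi>b_def w0_def w_def by simp
      also have "\<dots> = ln (Ak * w)" unfolding Ak_def using w by (simp add: ln_mult)
      finally have "N3 T \<le> Ak * w" using n3[of T] Ak w by simp
      then have "(N3 T)^2 \<le> (Ak * w)^2" using n3[of T] by (intro power_mono) auto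
      also have "\<dots> = Ak^2 * w * w" by (simp add: power2_eq_square)
      also have "\<dots> \<le> Ak^2 * 2 * w" using w Ak by (intro mult_right_mono mult_left_mono) auto
      finally have z2: "(N3 T)^2 \<le> 2 * Ak^2 * w" by simp
      have D2: "(N2 T - N3 T)^2 \<le> 8/3 * w"
        using keyineq[of T] unfolding w_def by (simp add: power2_commute)
      have "(N2 T)^2 \<le> 2 * (N3 T)^2 + 2 * (N2 T - N3 T)^2" by (rule sq_sum_le)
      also have "\<dots> \<le> Ck * w" unfolding Ck_def using z2 D2 by (simp add: algebra_simps)
      finally have y2: "(N2 T)^2 \<le> Ck * w" .
      have "2 * ln (N2 T) = ln ((N2 T)^2)" using n2[of T] by (simp add: ln_realpow)
      also have "\<dots> \<le> ln (Ck * w)" using y2 n2[of T] Ck w by (subst ln_le_cancel_iff) auto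
      also have "\<dots> = ln Ck + ln w" using Ck w by (simp add: ln_mult)
      finally have ly: "2 * ln (N2 T) \<le> ln Ck + ln w" .
      have "\<Phi>a 0 \<le> 2 * ln (N2 T) - ln w - ln (1 + (4*w0)*T) + 4 * integral {0..T} g3"
        using keyA[OF T(1)] unfolding \<Phi>a_def w_def by simp
      then have "ln (1 + (4*w0)*T) < R" unfolding R_def using ly I by linarith
      then have "1 + (4*w0)*T < exp R"
        using w0 T(1) by (metis add_pos_nonneg exp_less_cancel_iff exp_ln zero_less_one
            mult_nonneg_nonneg less_imp_le mult_pos_pos zero_less_numeral)
      moreover have "exp R \<le> (4*w0) * T"
        using T(2) w0 unfolding T0_def by (simp add: divide_le_eq mult.commute)
      ultimately show False by linarith
    qed
  qed
qed


lemma dexpneg: "((\<lambda>t. exp (- t)) has_real_derivative - exp (- t)) (at t)"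
  using DERIV_chain2[OF DERIV_exp DERIV_minus[OF DERIV_ident]] by simp

lemma a_case2_False:
  assumes big: "\<And>t. t \<ge> 0 \<Longrightarrow> Sp t \<ge> 1/2"
  shows False
proof -
  define c0 where "c0 = 1 - Sp 0 ^2"
  have "\<bar>Sp 0\<bar> < 1" using sp_bounds[of 0] by auto
  then have "Sp 0 ^2 < 1" by (simp add: abs_square_less_1)
  then have c0: "c0 > 0" unfolding c0_def by simp
  have lowc: "Sm t^2 + 3/4*(N2 t - N3 t)^2 \<ge> c0" if t: "t \<ge> 0" for t
  proof -
    have "0 \<le> Sp t" using big[OF t] by simp
    moreover have "Sp t \<le> Sp 0" using spmono[of 0 t] t by simp
    ultimately have "Sp t^2 \<le> Sp 0^2" by (intro power_mono) auto
    then show ?thesis using ca[of t] unfolding c0_def by linarith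
  qed
  have growth: "N2 0 * N3 0 * exp (2*T) \<le> N2 T * N3 T" if T: "T \<ge> 0" for T
  proof -
    have d: "((\<lambda>t. ln (N2 t) + ln (N3 t) - 2 * t) has_real_derivative
       (2*(Sp t^2 + Sm t^2) + 2 * Sp t + 2 * sqrt 3 * Sm t) + (2*(Sp t^2 + Sm t^2) + 2 * Sp t - 2 * sqrt 3 * Sm t) - 2 * 1) (at t)" for t
      by (intro DERIV_diff DERIV_add DERIV_cmult dln2a dln3a DERIV_ident)
    have "(\<lambda>t. ln (N2 t) + ln (N3 t) - 2 * t) 0 + 0 * integral {0..0} g1
       \<le> (\<lambda>t. ln (N2 t) + ln (N3 t) - 2 * t) T + 0 * integral {0..T} g1"
    proof (rule mono_lemma[OF cont_g(1) order_refl T d])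
      fix t :: real assume t: "0 < t"
      have "Sp t \<ge> 1/2" using big t by simp
      moreover have "Sp t^2 \<ge> 0" "Sm t^2 \<ge> 0" by simp_all
      moreover have "(2*(Sp t^2 + Sm t^2) + 2 * Sp t + 2 * sqrt 3 * Sm t)
         + (2*(Sp t^2 + Sm t^2) + 2 * Sp t - 2 * sqrt 3 * Sm t) - 2 * 1 + 0 * g1 t
         = 4 * Sp t^2 + 4 * Sm t^2 + 4 * Sp t - 2" by (simp add: algebra_simps)
      ultimately show "0 \<le> (2*(Sp t^2 + Sm t^2) + 2 * Sp t + 2 * sqrt 3 * Sm t)
         + (2*(Sp t^2 + Sm t^2) + 2 * Sp t - 2 * sqrt 3 * Sm t) - 2 * 1 + 0 * g1 t"
        by linarith
    qed
    then have "ln (N2 0) + ln (N3 0) + 2 * T \<le> ln (N2 T) + ln (N3 T)" by simp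
    then have "ln (N2 0 * N3 0 * exp (2*T)) \<le> ln (N2 T * N3 T)"
      using n2[of 0] n3[of 0] n2[of T] n3[of T] by (simp add: ln_mult)
    then show ?thesis using n2[of 0] n3[of 0] n2[of T] n3[of T] by (subst (asm) ln_le_cancel_iff) auto
  qed
  define \<sigma>0 where "\<sigma>0 = sqrt (N2 0 * N3 0)"
  have \<sigma>0: "\<sigma>0 > 0" unfolding \<sigma>0_def using n2[of 0] n3[of 0] by simp
  have Sb: "2 * \<sigma>0 * exp T \<le> N2 T + N3 T" if T: "T \<ge> 0" for T
  proof (rule power2_le_imp_le)
    have s2: "\<sigma>0^2 = N2 0 * N3 0" unfolding \<sigma>0_def using n2[of 0] n3[of 0]
      by (simp add: real_sqrt_pow2)
    have e2: "(exp T)^2 = exp (2*T)" by (rule exp_double[symmetric])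
    have "(2 * \<sigma>0 * exp T)^2 = 4 * (\<sigma>0^2 * (exp T)^2)"
      by (simp add: power_mult_distrib)
    also have "\<dots> = 4 * (N2 0 * N3 0 * exp (2*T))" unfolding s2 e2 ..
    also have "\<dots> \<le> 4 * (N2 T * N3 T)" using growth[OF T] by simp
    also have "\<dots> \<le> (N2 T + N3 T)^2"
    proof -
      have "(N2 T + N3 T)^2 - 4 * (N2 T * N3 T) = (N2 T - N3 T)^2" by (simp add: power2_eq_square algebra_simps)
      then show ?thesis by (metis diff_ge_0_iff_ge zero_le_power2)
    qed
    finally show "(2 * \<sigma>0 * exp T)^2 \<le> (N2 T + N3 T)^2" .
  qed (use n2[of T] n3[of T] in simp)
  define F where "F t = (N2 t - N3 t) * Sm t / (N2 t + N3 t)" for t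
  define Fd where "Fd t = 2 * sqrt 3 * Sm t^2 - (3 * sqrt 3/2)*(N2 t - N3 t)^2
     - (2 - 2*(Sp t^2+Sm t^2)) * (N2 t - N3 t) * Sm t / (N2 t + N3 t)
     - 2 * sqrt 3 * Sm t^2 * (N2 t - N3 t)^2 / (N2 t + N3 t)^2" for t
  have dF: "(F has_real_derivative Fd t) (at t)" for t
  proof -
    have Sp0: "N2 t + N3 t > 0" using n2[of t] n3[of t] by simp
    have S: "N2 t + N3 t \<noteq> 0" using Sp0 by simp
    note r = DERIV_divide[OF DERIV_mult[OF DERIV_diff[OF dN2[of t] dN3[of t]] dSm[of t]]
        DERIV_add[OF dN2[of t] dN3[of t]] S]
    note r' = r[unfolded z1 Fd_alg[OF Sp0]]
    show ?thesis unfolding F_def[abs_def] Fd_def by (rule r')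
  qed
  define K where "K = 11 / (2 * \<sigma>0)"
  have K: "K > 0" unfolding K_def using \<sigma>0 by simp
  define \<Phi> where "\<Phi> t = F t - 2 * sqrt 3 * ln (1 + Sp t) - 2 * sqrt 3 * c0 * t - K * exp (- t)" for t
  define \<phi> where "\<phi> t = Fd t - 2 * sqrt 3 * (-(3/2)*(N2 t - N3 t)^2) - 2 * sqrt 3 * c0 * 1 - K * (- exp (- t))" for t
  have d\<Phi>: "(\<Phi> has_real_derivative \<phi> t) (at t)" for t
    unfolding \<Phi>_def[abs_def] \<phi>_def
    by (intro DERIV_diff DERIV_cmult dF dlnw DERIV_ident dexpneg)
  have main: "\<Phi> 0 \<le> \<Phi> T" if T: "T \<ge> 0" for T
  proof -
    have "\<Phi> 0 + 0 * integral {0..0} g1 \<le> \<Phi> T + 0 * integral {0..T} g1"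
    proof (rule mono_lemma[OF cont_g(1) order_refl T d\<Phi>])
      fix t :: real assume t: "0 < t"
      define D where "D = N2 t - N3 t"
      define S where "S = N2 t + N3 t"
      define p where "p = 2 - 2*(Sp t^2+Sm t^2)"
      have S0: "S > 0" unfolding S_def using n2[of t] n3[of t] by simp
      have DS: "\<bar>D\<bar> \<le> S" unfolding D_def S_def using n2[of t] n3[of t] by simp
      have D2: "\<bar>D\<bar> \<le> 2" unfolding D_def by (rule Dbound(2))
      have Sm1: "\<bar>Sm t\<bar> \<le> 1" by (rule Dbound(3))
      have "p = 3/2*(N2 t - N3 t)^2" unfolding p_def by (rule ca_q)
      then have p1: "0 \<le> p" using zero_le_power2[of "N2 t - N3 t"] by linarith
      have "0 \<le> Sp t^2 + Sm t^2" by simp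
      then have p2: "p \<le> 2" unfolding p_def by simp
      note p = p1 p2
      note eb = err_bound[OF S0 DS D2 Sm1 p]
      have e: "\<phi> t = 2 * sqrt 3 * (Sm t^2 + 3/4*D^2) - 2 * sqrt 3 * c0 - p*D*Sm t/S
          - 2 * sqrt 3 * Sm t^2 * D^2 / S^2 + K * exp (- t)"
        unfolding \<phi>_def Fd_def D_def S_def p_def by (simp add: algebra_simps)
      have "2 * sqrt 3 * c0 \<le> 2 * sqrt 3 * (Sm t^2 + 3/4*D^2)"
        using lowc[of t] t unfolding D_def by (intro mult_left_mono) auto
      moreover have "11 / S \<le> K * exp (- t)"
      proof -
        have "2 * \<sigma>0 * exp t \<le> S" using Sb[of t] t unfolding S_def by simp
        then have "11 / S \<le> 11 / (2 * \<sigma>0 * exp t)" using \<sigma>0 S0 by (intro divide_left_mono) (auto intro!: mult_pos_pos)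
        also have "\<dots> = K * exp (- t)" unfolding K_def by (simp add: exp_minus field_simps)
        finally show ?thesis .
      qed
      moreover have "- (p*D*Sm t/S) \<ge> - (4/S)" using eb(1) by linarith
      moreover have "11 / S = 4/S + 7/S" by (simp add: field_simps)
      ultimately show "0 \<le> \<phi> t + 0 * g1 t" unfolding e using eb(2) by linarith
    qed
    then show ?thesis by simp
  qed
  define T where "T = max 0 ((2 - \<Phi> 0) / (2 * sqrt 3 * c0))"
  have T: "T \<ge> 0" unfolding T_def by simp
  have c3: "2 * sqrt 3 * c0 > 0" using c0 by simp
  have "2 - \<Phi> 0 \<le> 2 * sqrt 3 * c0 * T"
  proof -
    have "(2 - \<Phi> 0) / (2 * sqrt 3 * c0) \<le> T" unfolding T_def by simp
    then show ?thesis using c3 by (simp add: divide_le_eq mult.commute)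
  qed
  moreover have "F T \<le> 1"
  proof -
    have S0: "N2 T + N3 T > 0" using n2[of T] n3[of T] by simp
    have "\<bar>(N2 T - N3 T) * Sm T\<bar> \<le> (N2 T + N3 T) * 1"
      unfolding abs_mult using n2[of T] n3[of T] Dbound(3)[of T]
      by (intro mult_mono) auto
    then have "(N2 T - N3 T) * Sm T \<le> N2 T + N3 T" by simp
    then show ?thesis unfolding F_def using S0 by (simp add: divide_le_eq)
  qed
  moreover have "ln (1 + Sp T) \<ge> 0" using big[OF T] by simp
  moreover have "K * exp (- T) \<ge> 0" using K by simp
  moreover have "sqrt 3 * ln (1 + Sp T) \<ge> 0" using \<open>ln (1 + Sp T) \<ge> 0\<close> by simp
  ultimately have "\<Phi> T \<le> 1 - 2 * sqrt 3 * c0 * T" unfolding \<Phi>_def by linarith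
  then show False using main[OF T] \<open>2 - \<Phi> 0 \<le> 2 * sqrt 3 * c0 * T\<close> by linarith
qed

lemma a_a1: "((\<lambda>T. exp (- integral {0..T} g1)) \<longlongrightarrow> 0) at_top"
proof (cases "\<exists>\<tau>0\<ge>0. Sp \<tau>0 < 1/2")
  case True
  then obtain \<tau>0 where t0: "\<tau>0 \<ge> 0" "Sp \<tau>0 < 1/2" by auto
  define \<delta> where "\<delta> = 1 - 2 * Sp \<tau>0"
  have \<delta>: "\<delta> > 0" using t0 by (simp add: \<delta>_def)
  have key: "- \<delta> * \<tau>0 + 1 * integral {0..\<tau>0} g1 \<le> - \<delta> * T + 1 * integral {0..T} g1"
    if T: "\<tau>0 \<le> T" for T
  proof (rule mono_lemma[OF cont_g(1) t0(1) T, of "\<lambda>t. - \<delta> * t" "\<lambda>t. - \<delta> * 1"])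
    show "((\<lambda>t. - \<delta> * t) has_real_derivative - \<delta> * 1) (at t)" for t
      by (intro DERIV_cmult DERIV_ident)
    fix t assume t: "\<tau>0 < t"
    have "Sp t \<le> Sp \<tau>0" using spmono[of \<tau>0 t] t t0 by simp
    then show "0 \<le> - \<delta> * 1 + 1 * g1 t" unfolding g1_def \<delta>_def by simp
  qed
  show ?thesis
  proof (rule tendsto_exp_neg)
    fix k :: real
    show "eventually (\<lambda>T. k \<le> integral {0..T} g1) at_top"
      unfolding eventually_at_top_linorder
    proof (intro exI allI impI)
      fix T assume "max \<tau>0 (\<tau>0 + (k - integral {0..\<tau>0} g1) / \<delta>) \<le> T"
      then have T: "\<tau>0 \<le> T" "\<tau>0 + (k - integral {0..\<tau>0} g1) / \<delta> \<le> T" by auto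
      have "(k - integral {0..\<tau>0} g1) / \<delta> \<le> T - \<tau>0" using T(2) by simp
      then have "k - integral {0..\<tau>0} g1 \<le> \<delta> * (T - \<tau>0)" using \<delta> by (simp add: divide_le_eq mult.commute)
      then show "k \<le> integral {0..T} g1" using key[OF T(1)] by (simp add: algebra_simps)
    qed
  qed
next
  case False
  then have "\<And>t. t \<ge> 0 \<Longrightarrow> Sp t \<ge> 1/2" by (auto simp: not_less)
  from a_case2_False[OF this] show ?thesis ..
qed

end

end

theorem mainTheorem19:
  fixes N1 N2 N3 Sp Sm :: "real \<Rightarrow> real"
  assumes sol: "WH_solution N1 N2 N3 Sp Sm"
  shows
   "((\<forall>t. N1 t = 0) \<and> (\<forall>t. N2 t > 0) \<and> (\<forall>t. N3 t > 0)
       \<and> (\<forall>t. \<not> (N2 t = N3 t \<and> Sm t = 0))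
     \<longrightarrow> ((scale_factor (Sigma1 Sp Sm) \<longlongrightarrow> 0) at_top
          \<and> (scale_factor (Sigma2 Sp Sm) \<longlongrightarrow> 0) at_top
          \<and> (scale_factor (Sigma3 Sp Sm) \<longlongrightarrow> 0) at_top))
  \<and> ((\<forall>t. N1 t < 0) \<and> (\<forall>t. N2 t > 0) \<and> (\<forall>t. N3 t > 0)
     \<longrightarrow> ((scale_factor (Sigma2 Sp Sm) \<longlongrightarrow> 0) at_top
          \<and> (scale_factor (Sigma3 Sp Sm) \<longlongrightarrow> 0) at_top
          \<and> (\<exists>C. \<forall>t\<ge>0. \<bar>scale_factor (Sigma1 Sp Sm) t\<bar> \<le> C)))"
proof -
  interpret whs N1 N2 N3 Sp Sm by unfold_locales (rule sol)
  have PA: "((\<forall>t. N1 t = 0) \<and> (\<forall>t. N2 t > 0) \<and> (\<forall>t. N3 t > 0)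
       \<and> (\<forall>t. \<not> (N2 t = N3 t \<and> Sm t = 0)))
     \<longrightarrow> ((scale_factor (Sigma1 Sp Sm) \<longlongrightarrow> 0) at_top
          \<and> (scale_factor (Sigma2 Sp Sm) \<longlongrightarrow> 0) at_top
          \<and> (scale_factor (Sigma3 Sp Sm) \<longlongrightarrow> 0) at_top)"
  proof
    assume h: "(\<forall>t. N1 t = 0) \<and> (\<forall>t. N2 t > 0) \<and> (\<forall>t. N3 t > 0)
       \<and> (\<forall>t. \<not> (N2 t = N3 t \<and> Sm t = 0))"
    have z: "\<And>t. N1 t = 0" and p2: "\<And>t. N2 t > 0" and p3: "\<And>t. N3 t > 0"
      and nd: "\<And>t. \<not> (N2 t = N3 t \<and> Sm t = 0)" using h by blast+
    show "(scale_factor (Sigma1 Sp Sm) \<longlongrightarrow> 0) at_top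
          \<and> (scale_factor (Sigma2 Sp Sm) \<longlongrightarrow> 0) at_top
          \<and> (scale_factor (Sigma3 Sp Sm) \<longlongrightarrow> 0) at_top"
      unfolding sf_eq using a_a1[OF z p2 p3 nd] a_a2[OF z p2 p3 nd] a_a3[OF z p2 p3 nd] by blast
  qed
  have PB: "((\<forall>t. N1 t < 0) \<and> (\<forall>t. N2 t > 0) \<and> (\<forall>t. N3 t > 0))
     \<longrightarrow> ((scale_factor (Sigma2 Sp Sm) \<longlongrightarrow> 0) at_top
          \<and> (scale_factor (Sigma3 Sp Sm) \<longlongrightarrow> 0) at_top
          \<and> (\<exists>C. \<forall>t\<ge>0. \<bar>scale_factor (Sigma1 Sp Sm) t\<bar> \<le> C))"
  proof
    assume h: "(\<forall>t. N1 t < 0) \<and> (\<forall>t. N2 t > 0) \<and> (\<forall>t. N3 t > 0)"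
    have z: "\<And>t. N1 t < 0" and p2: "\<And>t. N2 t > 0" and p3: "\<And>t. N3 t > 0"
      using h by blast+
    show "(scale_factor (Sigma2 Sp Sm) \<longlongrightarrow> 0) at_top
          \<and> (scale_factor (Sigma3 Sp Sm) \<longlongrightarrow> 0) at_top
          \<and> (\<exists>C. \<forall>t\<ge>0. \<bar>scale_factor (Sigma1 Sp Sm) t\<bar> \<le> C)"
      unfolding sf_eq using b_a1_bounded[OF z p2 p3] b_a2[OF z p2 p3] b_a3[OF z p2 p3] by blast
  qed
  show ?thesis using PA PB by blast
qed

end
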